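(* Let $G_{\|v_0}$ be a well-initialized prefix-independent game, let $\epsilon\ge0$ and let $\bar\sigma$ be an $\epsilon$-SPE in $G_{\|v_0}$. Then there exists an $\epsilon$-fixed point $\lambda$ of the negotiation function such that for every history $hv$ of $G_{\|v_0}$, the play $\langle\bar\sigma_{\|hv}\rangle_v$ is $\lambda$-consistent.
   Context: A game is a tuple $G=(\Pi,V,(V_i)_{i\in\Pi},E,\mu)$ where $\Pi$ is a finite set of players, $(V,E)$ is a finite directed graph in which every vertex has at least one outgoing edge, $(V_i)_{i\in\Pi}$ is a partition of $V$, and $\mu:V^\omega\to\mathbb{R}^\Pi$ is the outcome function. Plays, histories, strategies, profiles, compatibility and $\langle\bar\sigma\rangle_v$ are as usual; $G_{\|v_0}$ is $G$ initialized at $v_0$ and is well-initialized if every vertex is reachable from $v_0$ in $(V,E)$; $-i$ denotes $\Pi\setminus\{i\}$; $\bar\sigma_{\|hv}$ is the profile in $G_{\|v}$ with $\sigma_{j\|hv}(h')=\sigma_j(hh')$. $G$ is prefix-independent if $\mu(h\rho)=\mu(\rho)$ for every history $h$ and play $\rho$. A profile $\bar\sigma$ in $G_{\|v_0}$ is an $\epsilon$-SPE if for every history $hv$ of $G_{\|v_0}$, every player $i$ and strategy $\sigma'_i$, $\mu_i(h\langle\bar\sigma_{-i\|hv},\sigma'_{i\|hv}\rangle_v)\le\mu_i(h\langle\bar\sigma_{\|hv}\rangle_v)+\epsilon$. A requirement is a map $\lambda:V\to\mathbb{R}\cup\{\pm\infty\}$. A play $\rho$ is $\lambda$-consistent if for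 every $i\in\Pi$ and $n$ with $\rho_n\in V_i$, $\mu_i(\rho_n\rho_{n+1}\cdots)\ge\lambda(\rho_n)$. $\lambda\mathrm{Rat}_i(v)$ is the set of profiles $\bar\sigma_{-i}$ in $G_{\|v}$ for which there exists $\sigma_i$ such that for every history $hw$ from $v$ compatible with $\bar\sigma_{-i}$, $\langle\bar\sigma_{\|hw}\rangle_w$ is $\lambda$-consistent. For $i\in\Pi$, $v\in V_i$: $\mathrm{nego}(\lambda)(v)=\inf_{\bar\sigma_{-i}\in\lambda\mathrm{Rat}_i(v)}\sup_{\sigma_i}\mu_i(\langle\bar\sigma_{-i},\sigma_i\rangle_v)$, $\inf\emptyset=+\infty$. $\lambda$ is an $\epsilon$-fixed point of $\mathrm{nego}$ if $\lambda(v)-\epsilon\le\mathrm{nego}(\lambda)(v)\le\lambda(v)+\epsilon$ for all $v$ (with $\pm\infty\pm\epsilon=\pm\infty$). *)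

theory Defs
  imports Complex_Main "HOL-Library.Extended_Real"
begin

text \<open>
  A game is given by: a set of players PI, a set of vertices V, an edge relation E,
  an owner map own (vertex v belongs to V_i iff own v = i; this encodes the partition
  (V_i)_{i in PI}), and an outcome function mu mapping infinite vertex sequences to
  payoff vectors (a real for each player).
\<close>

definition game :: "'p set \<Rightarrow> 'v set \<Rightarrow> ('v \<times> 'v) set \<Rightarrow> ('v \<Rightarrow> 'p)
    \<Rightarrow> ((nat \<Rightarrow> 'v) \<Rightarrow> 'p \<Rightarrow> real) \<Rightarrow> bool" where
  "game PI V E own mu \<longleftrightarrow> finite PI \<and> finite V \<and> E \<subseteq> V \<times> V
     \<and> (\<forall>v\<in>V. \<exists>w. (v, w) \<in> E) \<and> (\<forall>v\<in>V. own v \<in> PI)"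

definition is_path :: "('v \<times> 'v) set \<Rightarrow> 'v list \<Rightarrow> bool" where
  "is_path E h \<longleftrightarrow> h \<noteq> [] \<and> (\<forall>k. Suc k < length h \<longrightarrow> (h ! k, h ! Suc k) \<in> E)"

definition hist_from :: "('v \<times> 'v) set \<Rightarrow> 'v \<Rightarrow> 'v list \<Rightarrow> bool" where
  "hist_from E v h \<longleftrightarrow> is_path E h \<and> hd h = v"

definition is_play :: "('v \<times> 'v) set \<Rightarrow> (nat \<Rightarrow> 'v) \<Rightarrow> bool" where
  "is_play E \<rho> \<longleftrightarrow> (\<forall>n. (\<rho> n, \<rho> (Suc n)) \<in> E)"

definition conc :: "'v list \<Rightarrow> (nat \<Rightarrow> 'v) \<Rightarrow> nat \<Rightarrow> 'v" where
  "conc h \<rho> n = (if n < length h then h ! n else \<rho> (n - length h))"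

definition suffix :: "(nat \<Rightarrow> 'v) \<Rightarrow> nat \<Rightarrow> nat \<Rightarrow> 'v" where
  "suffix \<rho> n = (\<lambda>k. \<rho> (k + n))"

definition prefix_independent :: "'v set \<Rightarrow> ('v \<times> 'v) set \<Rightarrow> ((nat \<Rightarrow> 'v) \<Rightarrow> 'p \<Rightarrow> real) \<Rightarrow> bool" where
  "prefix_independent V E mu \<longleftrightarrow>
     (\<forall>h \<rho>. set h \<subseteq> V \<longrightarrow> is_path E h \<longrightarrow> is_play E \<rho> \<longrightarrow> mu (conc h \<rho>) = mu \<rho>)"

definition well_initialized :: "'v set \<Rightarrow> ('v \<times> 'v) set \<Rightarrow> 'v \<Rightarrow> bool" where
  "well_initialized V E v0 \<longleftrightarrow> v0 \<in> V \<and> (\<forall>v\<in>V. (v0, v) \<in> E\<^sup>*)"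

definition is_strategy :: "('v \<times> 'v) set \<Rightarrow> ('v \<Rightarrow> 'p) \<Rightarrow> 'p \<Rightarrow> 'v \<Rightarrow> ('v list \<Rightarrow> 'v) \<Rightarrow> bool" where
  "is_strategy E own i v \<sigma> \<longleftrightarrow>
     (\<forall>h. hist_from E v h \<longrightarrow> own (last h) = i \<longrightarrow> (last h, \<sigma> h) \<in> E)"

definition is_profile :: "'p set \<Rightarrow> ('v \<times> 'v) set \<Rightarrow> ('v \<Rightarrow> 'p) \<Rightarrow> 'v
    \<Rightarrow> ('p \<Rightarrow> 'v list \<Rightarrow> 'v) \<Rightarrow> bool" where
  "is_profile PI E own v \<sigma> \<longleftrightarrow> (\<forall>i\<in>PI. is_strategy E own i v (\<sigma> i))"

text \<open>A partial profile (sigma_{-i}): strategies for all players except i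
  (the component at i is irrelevant and never used).\<close>
definition is_profile_except :: "'p set \<Rightarrow> ('v \<times> 'v) set \<Rightarrow> ('v \<Rightarrow> 'p) \<Rightarrow> 'p \<Rightarrow> 'v
    \<Rightarrow> ('p \<Rightarrow> 'v list \<Rightarrow> 'v) \<Rightarrow> bool" where
  "is_profile_except PI E own i v \<sigma> \<longleftrightarrow> (\<forall>j\<in>PI - {i}. is_strategy E own j v (\<sigma> j))"

primrec out_hist :: "('v \<Rightarrow> 'p) \<Rightarrow> ('p \<Rightarrow> 'v list \<Rightarrow> 'v) \<Rightarrow> 'v \<Rightarrow> nat \<Rightarrow> 'v list" where
  "out_hist own \<sigma> v 0 = [v]"
| "out_hist own \<sigma> v (Suc n) =
     out_hist own \<sigma> v n @ [\<sigma> (own (last (out_hist own \<sigma> v n))) (out_hist own \<sigma> v n)]"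

definition outcome :: "('v \<Rightarrow> 'p) \<Rightarrow> ('p \<Rightarrow> 'v list \<Rightarrow> 'v) \<Rightarrow> 'v \<Rightarrow> nat \<Rightarrow> 'v" where
  "outcome own \<sigma> v n = last (out_hist own \<sigma> v n)"

text \<open>sigma_{|hv}: the profile with sigma_{j|hv}(h') = sigma_j(h h'); here h is the
  history hv without its last vertex.\<close>
definition shift :: "('p \<Rightarrow> 'v list \<Rightarrow> 'v) \<Rightarrow> 'v list \<Rightarrow> 'p \<Rightarrow> 'v list \<Rightarrow> 'v" where
  "shift \<sigma> h = (\<lambda>j h'. \<sigma> j (h @ h'))"

definition is_eps_SPE :: "'p set \<Rightarrow> ('v \<times> 'v) set \<Rightarrow> ('v \<Rightarrow> 'p)
    \<Rightarrow> ((nat \<Rightarrow> 'v) \<Rightarrow> 'p \<Rightarrow> real) \<Rightarrow> 'v \<Rightarrow> real \<Rightarrow> ('p \<Rightarrow> 'v list \<Rightarrow> 'v) \<Rightarrow> bool" where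
  "is_eps_SPE PI E own mu v0 \<epsilon> \<sigma> \<longleftrightarrow> is_profile PI E own v0 \<sigma> \<and>
     (\<forall>hv i \<sigma>'. hist_from E v0 hv \<longrightarrow> i \<in> PI \<longrightarrow> is_strategy E own i v0 \<sigma>' \<longrightarrow>
        mu (conc (butlast hv) (outcome own (shift (\<sigma>(i := \<sigma>')) (butlast hv)) (last hv))) i
        \<le> mu (conc (butlast hv) (outcome own (shift \<sigma> (butlast hv)) (last hv))) i + \<epsilon>)"

definition consistent :: "'p set \<Rightarrow> ('v \<Rightarrow> 'p) \<Rightarrow> ((nat \<Rightarrow> 'v) \<Rightarrow> 'p \<Rightarrow> real)
    \<Rightarrow> ('v \<Rightarrow> ereal) \<Rightarrow> (nat \<Rightarrow> 'v) \<Rightarrow> bool" where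
  "consistent PI own mu lam \<rho> \<longleftrightarrow>
     (\<forall>i\<in>PI. \<forall>n. own (\<rho> n) = i \<longrightarrow> ereal (mu (suffix \<rho> n) i) \<ge> lam (\<rho> n))"

definition compatible_except :: "('v \<Rightarrow> 'p) \<Rightarrow> 'p \<Rightarrow> ('p \<Rightarrow> 'v list \<Rightarrow> 'v) \<Rightarrow> 'v list \<Rightarrow> bool" where
  "compatible_except own i \<tau> h \<longleftrightarrow>
     (\<forall>k. Suc k < length h \<longrightarrow> own (h ! k) \<noteq> i \<longrightarrow> h ! Suc k = \<tau> (own (h ! k)) (take (Suc k) h))"

definition lamRat :: "'p set \<Rightarrow> ('v \<times> 'v) set \<Rightarrow> ('v \<Rightarrow> 'p) \<Rightarrow> ((nat \<Rightarrow> 'v) \<Rightarrow> 'p \<Rightarrow> real)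
    \<Rightarrow> ('v \<Rightarrow> ereal) \<Rightarrow> 'p \<Rightarrow> 'v \<Rightarrow> ('p \<Rightarrow> 'v list \<Rightarrow> 'v) set" where
  "lamRat PI E own mu lam i v = {\<tau>. is_profile_except PI E own i v \<tau> \<and>
     (\<exists>\<sigma>i. is_strategy E own i v \<sigma>i \<and>
        (\<forall>hw. hist_from E v hw \<longrightarrow> compatible_except own i \<tau> hw \<longrightarrow>
           consistent PI own mu lam
             (outcome own (shift (\<tau>(i := \<sigma>i)) (butlast hw)) (last hw))))}"

definition nego :: "'p set \<Rightarrow> ('v \<times> 'v) set \<Rightarrow> ('v \<Rightarrow> 'p) \<Rightarrow> ((nat \<Rightarrow> 'v) \<Rightarrow> 'p \<Rightarrow> real)
    \<Rightarrow> ('v \<Rightarrow> ereal) \<Rightarrow> 'v \<Rightarrow> ereal" where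
  "nego PI E own mu lam v = (let i = own v in
     (INF \<tau>\<in>lamRat PI E own mu lam i v.
        (SUP \<sigma>i\<in>{\<sigma>i. is_strategy E own i v \<sigma>i}.
           ereal (mu (outcome own (\<tau>(i := \<sigma>i)) v) i))))"

definition eps_fixed_point :: "'p set \<Rightarrow> 'v set \<Rightarrow> ('v \<times> 'v) set \<Rightarrow> ('v \<Rightarrow> 'p)
    \<Rightarrow> ((nat \<Rightarrow> 'v) \<Rightarrow> 'p \<Rightarrow> real) \<Rightarrow> real \<Rightarrow> ('v \<Rightarrow> ereal) \<Rightarrow> bool" where
  "eps_fixed_point PI V E own mu \<epsilon> lam \<longleftrightarrow>
     (\<forall>v\<in>V. lam v - ereal \<epsilon> \<le> nego PI E own mu lam v \<and> nego PI E own mu lam v \<le> lam v + ereal \<epsilon>)"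

end

theory Submission
  imports Defs
begin

lemma shift_shift: "shift (shift \<sigma> a) b = shift \<sigma> (a @ b)"
  by (simp add: shift_def)

lemma shift_Nil: "shift \<sigma> [] = \<sigma>"
  by (simp add: shift_def)

lemma out_hist_length: "length (out_hist own \<tau> v n) = Suc n"
  by (induction n) auto

lemma out_hist_ne [simp]: "out_hist own \<tau> v n \<noteq> []"
  by (induction n) auto

lemma out_hist_hd: "hd (out_hist own \<tau> v n) = v"
  by (induction n) (auto simp: out_hist_ne)

lemma out_hist_split:
  "out_hist own \<tau> w (n + m) = butlast (out_hist own \<tau> w n) @
     out_hist own (shift \<tau> (butlast (out_hist own \<tau> w n))) (last (out_hist own \<tau> w n)) m"
proof (induction m)
  case 0
  then show ?case using out_hist_ne[of own \<tau> w n] by simp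
next
  case (Suc m)
  have "out_hist own \<tau> w (n + Suc m) = out_hist own \<tau> w (Suc (n + m))" by simp
  then show ?case using Suc out_hist_ne by (simp add: shift_def)
qed

lemma outcome_suffix:
  "suffix (outcome own \<tau> w) n =
   outcome own (shift \<tau> (butlast (out_hist own \<tau> w n))) (outcome own \<tau> w n)"
proof
  fix k
  have "out_hist own \<tau> w (k + n) = out_hist own \<tau> w (n + k)" by (simp add: add.commute)
  then show "suffix (outcome own \<tau> w) n k =
   outcome own (shift \<tau> (butlast (out_hist own \<tau> w n))) (outcome own \<tau> w n) k"
    unfolding suffix_def outcome_def using out_hist_split[of own \<tau> w n k] out_hist_ne
    by simp
qed

lemma out_hist_cong:
  assumes "\<And>j h. h \<noteq> [] \<Longrightarrow> hd h = v \<Longrightarrow> \<tau> j h = \<tau>' j h"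
  shows "out_hist own \<tau> v n = out_hist own \<tau>' v n"
  by (induction n) (auto simp: assms out_hist_ne out_hist_hd)

lemma path_app:
  assumes "is_path E (a @ [w])" "is_path E g" "hd g = w"
  shows "is_path E (a @ g)"
proof -
  have g: "g \<noteq> []" using assms(2) by (simp add: is_path_def)
  have A: "\<And>k. Suc k < Suc (length a) \<Longrightarrow> ((a@[w]) ! k, (a@[w]) ! Suc k) \<in> E"
    using assms(1) by (simp add: is_path_def)
  have B: "\<And>k. Suc k < length g \<Longrightarrow> (g ! k, g ! Suc k) \<in> E"
    using assms(2) by (simp add: is_path_def)
  have g0: "g ! 0 = w" using g assms(3) by (simp add: hd_conv_nth)
  have "((a@g) ! k, (a@g) ! Suc k) \<in> E" if "Suc k < length (a@g)" for k
  proof (cases "Suc k < length a")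
    case True then show ?thesis using A[of k] by (simp add: nth_append)
  next
    case F: False
    show ?thesis
    proof (cases "Suc k = length a")
      case True
      then show ?thesis using A[of k] g0 by (simp add: nth_append)
    next
      case False
      then have "k \<ge> length a" using F by simp
      then show ?thesis using B[of "k - length a"] that by (simp add: nth_append Suc_diff_le)
    qed
  qed
  then show ?thesis using g by (simp add: is_path_def)
qed

lemma path_snoc:
  assumes "is_path E X" "(last X, x) \<in> E"
  shows "is_path E (X @ [x])"
proof -
  have X: "X \<noteq> []" using assms(1) by (simp add: is_path_def)
  have "is_path E [last X, x]" using assms(2) by (simp add: is_path_def less_Suc_eq)
  then have "is_path E (butlast X @ [last X, x])"
    using path_app[of E "butlast X" "last X" "[last X, x]"] X assms(1) by simp
  then show ?thesis using X by (metis append_butlast_last_id append_Cons append_assoc append_Nil)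
qed

lemma path_V:
  assumes "is_path E h" "hd h \<in> V" "E \<subseteq> V \<times> V"
  shows "set h \<subseteq> V"
proof
  fix x assume "x \<in> set h"
  then obtain k where k: "k < length h" "h ! k = x" by (auto simp: in_set_conv_nth)
  show "x \<in> V"
  proof (cases k)
    case 0 then show ?thesis using k assms by (simp add: is_path_def hd_conv_nth)
  next
    case (Suc k')
    then have "(h!k', h!k) \<in> E" using k assms(1) unfolding is_path_def by blast
    then show ?thesis using assms(3) k by auto
  qed
qed

lemma path_drop:
  assumes "is_path E g" "k < length g"
  shows "is_path E (drop k g)"
  using assms by (auto simp: is_path_def)

lemma path_butlast:
  assumes "is_path E g" "butlast g \<noteq> []"
  shows "is_path E (butlast g)"
  using assms by (auto simp: is_path_def nth_butlast)

lemma hist_app: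
  assumes "hist_from E v0 hv" "hist_from E (last hv) g"
  shows "hist_from E v0 (butlast hv @ g)"
proof -
  have hv: "hv \<noteq> []" using assms(1) by (simp add: hist_from_def is_path_def)
  have g: "g \<noteq> []" using assms(2) by (simp add: hist_from_def is_path_def)
  have p: "is_path E (butlast hv @ [last hv])" using assms(1) hv by (simp add: hist_from_def)
  have "is_path E (butlast hv @ g)" using path_app[OF p] assms(2) by (simp add: hist_from_def)
  moreover have "hd (butlast hv @ g) = hd (butlast hv @ [last hv])"
    using g assms(2) by (cases "butlast hv") (auto simp: hist_from_def)
  ultimately show ?thesis using assms(1) hv by (simp add: hist_from_def)
qed

lemma out_hist_path:
  assumes "game PI V E own mu" "v \<in> V" "is_profile PI E own v \<tau>"
  shows "hist_from E v (out_hist own \<tau> v n)"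
proof (induction n)
  case 0 show ?case by (simp add: hist_from_def is_path_def)
next
  case (Suc n)
  let ?X = "out_hist own \<tau> v n"
  have E: "E \<subseteq> V \<times> V" and own: "\<forall>v\<in>V. own v \<in> PI" using assms(1) unfolding game_def by auto
  have p: "is_path E ?X" and h: "hd ?X = v" using Suc unfolding hist_from_def by auto
  have "set ?X \<subseteq> V" using path_V[OF p _ E] h assms(2) by simp
  moreover have "last ?X \<in> set ?X" using last_in_set[of ?X] by simp
  ultimately have "last ?X \<in> V" by (rule subsetD)
  hence j: "own (last ?X) \<in> PI" using own by (rule bspec[rotated])
  have S: "\<forall>h. hist_from E v h \<longrightarrow> own (last h) = own (last ?X) \<longrightarrow> (last h, \<tau> (own (last ?X)) h) \<in> E"
    using assms(3) j unfolding is_profile_def is_strategy_def by blast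
  have "(last ?X, \<tau> (own (last ?X)) ?X) \<in> E" using S[rule_format, OF Suc] by simp
  then have "is_path E (?X @ [\<tau> (own (last ?X)) ?X])"
    by (rule path_snoc[OF p])
  moreover have "hd (?X @ [\<tau> (own (last ?X)) ?X]) = v" using h by simp
  ultimately show ?case unfolding hist_from_def out_hist.simps by (rule conjI)
qed

lemma outcome_play:
  assumes "game PI V E own mu" "v \<in> V" "is_profile PI E own v \<tau>"
  shows "is_play E (outcome own \<tau> v)"
  unfolding is_play_def
proof
  fix n
  let ?X = "out_hist own \<tau> v n"
  let ?x = "\<tau> (own (last ?X)) ?X"
  have P: "is_path E (?X @ [?x])" using out_hist_path[OF assms, of "Suc n"] by (simp add: hist_from_def)
  have L: "Suc n < length (?X @ [?x])" by (simp add: out_hist_length)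
  have "((?X @ [?x]) ! n, (?X @ [?x]) ! Suc n) \<in> E"
    using P L unfolding is_path_def by blast
  moreover have "?X ! n = last ?X" using out_hist_length[of own \<tau> v n]
    by (simp add: last_conv_nth)
  ultimately show "(outcome own \<tau> v n, outcome own \<tau> v (Suc n)) \<in> E"
    by (simp add: outcome_def nth_append out_hist_length)
qed

lemma shift_profile:
  assumes "hist_from E v0 hv" "is_profile PI E own v0 \<sigma>"
  shows "is_profile PI E own (last hv) (shift \<sigma> (butlast hv))"
  unfolding is_profile_def is_strategy_def
proof (intro ballI allI impI)
  fix j h assume j: "j \<in> PI" and h: "hist_from E (last hv) h" and o: "own (last h) = j"
  have h': "hist_from E v0 (butlast hv @ h)" using hist_app[OF assms(1) h] .
  have hne: "h \<noteq> []" using h by (simp add: hist_from_def is_path_def)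
  have S: "\<forall>h. hist_from E v0 h \<longrightarrow> own (last h) = j \<longrightarrow> (last h, \<sigma> j h) \<in> E"
    using assms(2) j unfolding is_profile_def is_strategy_def by blast
  have "last (butlast hv @ h) = last h" using hne by simp
  then have "(last (butlast hv @ h), \<sigma> j (butlast hv @ h)) \<in> E"
    using S[rule_format, OF h'] o by simp
  then show "(last h, shift \<sigma> (butlast hv) j h) \<in> E" using hne by (simp add: shift_def)
qed



lemma ereal_aux1: "(a::ereal) \<le> ereal b + ereal e \<Longrightarrow> a - ereal e \<le> ereal b"
  by (simp add: ereal_minus_le)

lemma ereal_aux2: "(a::ereal) - ereal e \<le> c \<Longrightarrow> a \<le> c + ereal e"
  by (simp add: ereal_minus_le)

theorem mainTheorem4:
  fixes PI :: "'p set" and V :: "'v set" and E :: "('v \<times> 'v) set"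
    and own :: "'v \<Rightarrow> 'p" and mu :: "(nat \<Rightarrow> 'v) \<Rightarrow> 'p \<Rightarrow> real"
    and v0 :: 'v and \<epsilon> :: real and \<sigma> :: "'p \<Rightarrow> 'v list \<Rightarrow> 'v"
  assumes "game PI V E own mu"
    and "well_initialized V E v0"
    and "prefix_independent V E mu"
    and "\<epsilon> \<ge> 0"
    and "is_eps_SPE PI E own mu v0 \<epsilon> \<sigma>"
  shows "\<exists>lam. eps_fixed_point PI V E own mu \<epsilon> lam \<and>
           (\<forall>hv. hist_from E v0 hv \<longrightarrow>
              consistent PI own mu lam (outcome own (shift \<sigma> (butlast hv)) (last hv)))"
proof -
  have GE: "E \<subseteq> V \<times> V" and Gown: "\<forall>v\<in>V. own v \<in> PI" using assms(1) unfolding game_def by auto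
  have v0: "v0 \<in> V" using assms(2) by (simp add: well_initialized_def)
  have prof: "is_profile PI E own v0 \<sigma>" using assms(5) unfolding is_eps_SPE_def by blast
  have spe: "\<And>hv i \<sigma>'. hist_from E v0 hv \<Longrightarrow> i \<in> PI \<Longrightarrow> is_strategy E own i v0 \<sigma>' \<Longrightarrow>
        mu (conc (butlast hv) (outcome own (shift (\<sigma>(i := \<sigma>')) (butlast hv)) (last hv))) i
        \<le> mu (conc (butlast hv) (outcome own (shift \<sigma> (butlast hv)) (last hv))) i + \<epsilon>"
    using assms(5) unfolding is_eps_SPE_def by blast
  define lam where "lam = (\<lambda>v. INF hv\<in>{hv. hist_from E v0 hv \<and> last hv = v}.
      ereal (mu (outcome own (shift \<sigma> (butlast hv)) v) (own v)))"
  have hvne: "hv \<noteq> []" if "hist_from E v0 hv" for hv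
    using that by (simp add: hist_from_def is_path_def)
  have hvV: "set hv \<subseteq> V" if "hist_from E v0 hv" for hv
    using that path_V[of E hv V] GE v0 by (simp add: hist_from_def)
  have lastV: "last hv \<in> V" if "hist_from E v0 hv" for hv
    using hvV[OF that] last_in_set[OF hvne[OF that]] by blast
  have cons: "consistent PI own mu lam (outcome own (shift \<sigma> (butlast hv)) (last hv))"
    if hv: "hist_from E v0 hv" for hv
  proof -
    let ?\<tau> = "shift \<sigma> (butlast hv)" let ?w = "last hv" let ?\<rho> = "outcome own ?\<tau> ?w"
    have P: "is_profile PI E own ?w ?\<tau>" using shift_profile[OF hv prof] .
    show ?thesis unfolding consistent_def
    proof (intro ballI allI impI)
      fix i n assume "i \<in> PI" and oi: "own (?\<rho> n) = i"
      let ?H = "out_hist own ?\<tau> ?w n"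
      have H: "hist_from E ?w ?H" using out_hist_path[OF assms(1) lastV[OF hv] P] .
      define hv' where "hv' = butlast hv @ ?H"
      have h1: "hist_from E v0 hv'" unfolding hv'_def using hist_app[OF hv H] .
      have h2: "butlast hv' = butlast hv @ butlast ?H" by (simp add: hv'_def butlast_append)
      have h3: "last hv' = ?\<rho> n" by (simp add: hv'_def outcome_def)
      have suf: "suffix ?\<rho> n = outcome own (shift \<sigma> (butlast hv')) (last hv')"
        using outcome_suffix[of own ?\<tau> ?w n] h2 h3 by (simp add: shift_shift outcome_def)
      have "lam (last hv') \<le> ereal (mu (outcome own (shift \<sigma> (butlast hv')) (last hv')) (own (last hv')))"
        unfolding lam_def using h1 by (intro INF_lower) simp
      then show "lam (?\<rho> n) \<le> ereal (mu (suffix ?\<rho> n) i)" using suf h3 oi by simp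
    qed
  qed
  have fp: "eps_fixed_point PI V E own mu \<epsilon> lam"
    unfolding eps_fixed_point_def
  proof (intro ballI conjI)
    fix v assume v: "v \<in> V"
    let ?i = "own v"
    have iPI: "?i \<in> PI" using Gown v by blast
    have low: "lam v \<le> nego PI E own mu lam v"
      unfolding nego_def Let_def
    proof (rule INF_greatest)
      fix \<tau> assume "\<tau> \<in> lamRat PI E own mu lam ?i v"
      then obtain \<sigma>i where si: "is_strategy E own ?i v \<sigma>i" and
        C: "\<forall>hw. hist_from E v hw \<longrightarrow> compatible_except own ?i \<tau> hw \<longrightarrow>
           consistent PI own mu lam (outcome own (shift (\<tau>(?i := \<sigma>i)) (butlast hw)) (last hw))"
        unfolding lamRat_def by blast
      let ?\<rho> = "outcome own (\<tau>(?i := \<sigma>i)) v"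
      have h1: "hist_from E v [v]" by (simp add: hist_from_def is_path_def)
      have h2: "compatible_except own ?i \<tau> [v]" by (simp add: compatible_except_def)
      have "consistent PI own mu lam (outcome own (shift (\<tau>(?i := \<sigma>i)) (butlast [v])) (last [v]))"
        using C h1 h2 by blast
      then have "consistent PI own mu lam ?\<rho>" by (simp add: shift_Nil)
      then have "\<forall>n. own (?\<rho> n) = ?i \<longrightarrow> lam (?\<rho> n) \<le> ereal (mu (suffix ?\<rho> n) ?i)"
        unfolding consistent_def using iPI by blast
      then have "own (?\<rho> 0) = ?i \<longrightarrow> lam (?\<rho> 0) \<le> ereal (mu (suffix ?\<rho> 0) ?i)" by (rule spec)
      moreover have "?\<rho> 0 = v" by (simp add: outcome_def)
      moreover have "suffix ?\<rho> 0 = ?\<rho>" by (simp add: suffix_def)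
      ultimately have "lam v \<le> ereal (mu ?\<rho> ?i)" by simp
      also have "\<dots> \<le> (SUP \<sigma>i\<in>{\<sigma>i. is_strategy E own ?i v \<sigma>i}. ereal (mu (outcome own (\<tau>(?i := \<sigma>i)) v) ?i))"
        by (rule SUP_upper) (simp add: si)
      finally show "lam v \<le> (SUP \<sigma>i\<in>{\<sigma>i. is_strategy E own ?i v \<sigma>i}. ereal (mu (outcome own (\<tau>(?i := \<sigma>i)) v) ?i))" .
    qed
    show "lam v - ereal \<epsilon> \<le> nego PI E own mu lam v"
      using low assms(4) by (meson ereal_diff_le_mono_left ereal_less_eq(5))
    have up0: "nego PI E own mu lam v - ereal \<epsilon> \<le> (INF hv\<in>{hv. hist_from E v0 hv \<and> last hv = v}.
      ereal (mu (outcome own (shift \<sigma> (butlast hv)) v) (own v)))"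
    proof (rule INF_greatest)
      fix hv assume "hv \<in> {hv. hist_from E v0 hv \<and> last hv = v}"
      then have hv: "hist_from E v0 hv" and lv: "last hv = v" by auto
      let ?\<tau> = "shift \<sigma> (butlast hv)"
      have P: "is_profile PI E own v ?\<tau>" using shift_profile[OF hv prof] lv by simp
      have A: "is_profile_except PI E own ?i v ?\<tau>"
        using P unfolding is_profile_def is_profile_except_def by blast
      have B: "is_strategy E own ?i v (?\<tau> ?i)" using P iPI unfolding is_profile_def by blast
      have C: "\<forall>hw. hist_from E v hw \<longrightarrow> compatible_except own ?i ?\<tau> hw \<longrightarrow>
           consistent PI own mu lam (outcome own (shift (?\<tau>(?i := ?\<tau> ?i)) (butlast hw)) (last hw))"
      proof (intro allI impI)
        fix hw assume hw: "hist_from E v hw"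
        have hwne: "hw \<noteq> []" using hw by (simp add: hist_from_def is_path_def)
        have h1: "hist_from E v0 (butlast hv @ hw)" using hist_app[OF hv] hw lv by simp
        have "consistent PI own mu lam (outcome own (shift \<sigma> (butlast (butlast hv @ hw))) (last (butlast hv @ hw)))"
          using cons[OF h1] .
        then show "consistent PI own mu lam (outcome own (shift (?\<tau>(?i := ?\<tau> ?i)) (butlast hw)) (last hw))"
          using hwne by (simp add: shift_shift butlast_append)
      qed
      have inR: "?\<tau> \<in> lamRat PI E own mu lam ?i v"
        unfolding lamRat_def using A B C by blast
      have SUPb: "(SUP \<sigma>i\<in>{\<sigma>i. is_strategy E own ?i v \<sigma>i}. ereal (mu (outcome own (?\<tau>(?i := \<sigma>i)) v) ?i))
           \<le> ereal (mu (outcome own ?\<tau> v) ?i) + ereal \<epsilon>"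
      proof (rule SUP_least)
        fix \<sigma>i assume "\<sigma>i \<in> {\<sigma>i. is_strategy E own ?i v \<sigma>i}"
        then have si: "is_strategy E own ?i v \<sigma>i" by simp
        define \<sigma>' where "\<sigma>' = (\<lambda>g. if take (length hv) g = hv then \<sigma>i (drop (length hv - 1) g) else \<sigma> ?i g)"
        have hvn: "hv \<noteq> []" using hvne[OF hv] .
        have lastc: "last hv = hv ! (length hv - 1)" using hvn by (simp add: last_conv_nth)
        have st: "is_strategy E own ?i v0 \<sigma>'"
          unfolding is_strategy_def
        proof (intro allI impI)
          fix g assume g: "hist_from E v0 g" and og: "own (last g) = ?i"
          show "(last g, \<sigma>' g) \<in> E"
          proof (cases "take (length hv) g = hv")
            case True
            have "length (take (length hv) g) = length hv" using True by simp
            then have lhv: "length hv \<le> length g" by simp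
            let ?k = "length hv - 1"
            have k: "?k < length g" using lhv hvn by (cases hv) auto
            have kk: "?k < length hv" using hvn by (cases hv) auto
            have pg: "is_path E (drop ?k g)" using path_drop[OF _ k] g by (simp add: hist_from_def)
            have "hd (drop ?k g) = g ! ?k" using k by (rule hd_drop_conv_nth)
            also have "\<dots> = take (length hv) g ! ?k" using kk by simp
            also have "\<dots> = v" using True lastc lv by simp
            finally have hdg: "hd (drop ?k g) = v" .
            have lg: "last (drop ?k g) = last g" using k by (simp add: last_drop)
            have "(last (drop ?k g), \<sigma>i (drop ?k g)) \<in> E"
              using si pg hdg lg og unfolding is_strategy_def hist_from_def by metis
            then show ?thesis using True lg by (simp add: \<sigma>'_def)
          next
            case False
            have "(last g, \<sigma> ?i g) \<in> E" using prof iPI g og unfolding is_profile_def is_strategy_def by blast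
            then show ?thesis using False by (simp add: \<sigma>'_def)
          qed
        qed
        have ag: "out_hist own (shift (\<sigma>(?i := \<sigma>')) (butlast hv)) v n = out_hist own (?\<tau>(?i := \<sigma>i)) v n" for n
        proof (rule out_hist_cong)
          fix j h assume hne: "h \<noteq> []" and hh: "hd h = v"
          show "shift (\<sigma>(?i := \<sigma>')) (butlast hv) j h = (?\<tau>(?i := \<sigma>i)) j h"
          proof (cases "j = ?i")
            case True
            have hvs: "butlast hv @ [v] = hv" using hvn lv by (metis append_butlast_last_id)
            from hne obtain x t where ht: "h = x # t" by (cases h) auto
            have lh: "length hv = Suc (length (butlast hv))" using hvn by simp
            have "take (length hv) (butlast hv @ h) = butlast hv @ [v]" using lh ht hh by simp
            then have t1: "take (length hv) (butlast hv @ h) = hv" using hvs by simp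
            have t2: "drop (length hv - 1) (butlast hv @ h) = h" using lh by simp
            show ?thesis using True t1 t2 by (simp add: shift_def \<sigma>'_def)
          next
            case False
            then show ?thesis by (simp add: shift_def)
          qed
        qed
        have og: "outcome own (shift (\<sigma>(?i := \<sigma>')) (butlast hv)) v = outcome own (?\<tau>(?i := \<sigma>i)) v"
          by (rule ext) (simp add: outcome_def ag)
        have P2: "is_profile PI E own v (?\<tau>(?i := \<sigma>i))" using P si unfolding is_profile_def by auto
        have pl1: "is_play E (outcome own (?\<tau>(?i := \<sigma>i)) v)" using outcome_play[OF assms(1) v P2] .
        have pl2: "is_play E (outcome own ?\<tau> v)" using outcome_play[OF assms(1) v P] .
        have pi: "mu (conc (butlast hv) \<rho>) = mu \<rho>" if "is_play E \<rho>" for \<rho>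
        proof (cases "butlast hv = []")
          case True
          have "conc [] \<rho> = \<rho>" by (rule ext) (simp add: conc_def)
          then show ?thesis using True by simp
        next
          case False
          have "is_path E (butlast hv)" using path_butlast[OF _ False] hv by (simp add: hist_from_def)
          moreover have "set (butlast hv) \<subseteq> V" using hvV[OF hv] by (meson in_set_butlastD subset_iff)
          ultimately show ?thesis using assms(3) that unfolding prefix_independent_def by blast
        qed
        have "mu (conc (butlast hv) (outcome own (shift (\<sigma>(?i := \<sigma>')) (butlast hv)) (last hv))) ?i
              \<le> mu (conc (butlast hv) (outcome own (shift \<sigma> (butlast hv)) (last hv))) ?i + \<epsilon>"
          using spe[OF hv iPI st] .
        then have "mu (outcome own (?\<tau>(?i := \<sigma>i)) v) ?i \<le> mu (outcome own ?\<tau> v) ?i + \<epsilon>"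
          using og lv pi[OF pl1] pi[OF pl2] by simp
        then show "ereal (mu (outcome own (?\<tau>(?i := \<sigma>i)) v) ?i) \<le> ereal (mu (outcome own ?\<tau> v) ?i) + ereal \<epsilon>"
          by simp
      qed
      have "nego PI E own mu lam v \<le> (SUP \<sigma>i\<in>{\<sigma>i. is_strategy E own ?i v \<sigma>i}. ereal (mu (outcome own (?\<tau>(?i := \<sigma>i)) v) ?i))"
        unfolding nego_def Let_def by (rule INF_lower[OF inR])
      then have "nego PI E own mu lam v \<le> ereal (mu (outcome own ?\<tau> v) ?i) + ereal \<epsilon>"
        using SUPb by (rule order_trans)
      then have "nego PI E own mu lam v - ereal \<epsilon> \<le> ereal (mu (outcome own (shift \<sigma> (butlast hv)) v) (own v))"
        by (rule ereal_aux1)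
      then show "nego PI E own mu lam v - ereal \<epsilon> \<le> ereal (mu (outcome own (shift \<sigma> (butlast hv)) v) (own v))"
        by simp
    qed
    have up: "nego PI E own mu lam v - ereal \<epsilon> \<le> lam v" using up0 by (simp add: lam_def)
    show "nego PI E own mu lam v \<le> lam v + ereal \<epsilon>" using up by (rule ereal_aux2)
  qed
  show ?thesis using fp cons by blast
qed

end
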